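(* Let $0<r<\frac{C_0}{2}$ where $C_0=\frac14$. Then $1-|z|^2\simeq1-|w|^2$ whenever $z,w\in\mathbb{B}_n$ and $w\in D_\psi(z,r)$, with comparability constants independent of $z,w$.
   Context: $\mathbb{B}_n$ is the open unit ball of $\mathbb{C}^n$, $\langle z,w\rangle=\sum_jz_j\overline{w_j}$. For $z\ne0$, $P_z\zeta=\frac{\langle\zeta,z\rangle}{\langle z,z\rangle}z$, $P_0=0$, $Q_z=I-P_z$, and $D_\psi(z,r)=\{w\in\mathbb{B}_n:|z-P_zw|<r(1-|z|^2)^{3/2},\ |Q_zw|<r(1-|z|^2)\}$. $A\simeq B$ means $C^{-1}B\le A\le CB$ for a positive constant $C$. *)

theory Defs
  imports "HOL-Analysis.Analysis"
begin

definition cinner :: "complex^'n \<Rightarrow> complex^'n \<Rightarrow> complex" where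
  "cinner z w = (\<Sum>j\<in>UNIV. z $ j * cnj (w $ j))"

definition unit_ball :: "(complex^'n) set" where
  "unit_ball = {z. norm z < 1}"

definition Pz :: "complex^'n \<Rightarrow> complex^'n \<Rightarrow> complex^'n" where
  "Pz z \<zeta> = (if z = 0 then 0 else (cinner \<zeta> z / cinner z z) *s z)"

definition Qz :: "complex^'n \<Rightarrow> complex^'n \<Rightarrow> complex^'n" where
  "Qz z \<zeta> = \<zeta> - Pz z \<zeta>"

definition D_psi :: "complex^'n \<Rightarrow> real \<Rightarrow> (complex^'n) set" where
  "D_psi z r = {w \<in> unit_ball. norm (z - Pz z w) < r * (1 - (norm z)\<^sup>2) powr (3/2)
                               \<and> norm (Qz z w) < r * (1 - (norm z)\<^sup>2)}"

end

theory Submission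
  imports Defs
begin

lemma key_real:
  fixes nz nw e d r :: real
  assumes "0 \<le> nz" "nz < 1" "0 \<le> nw" "d = 1 - nz^2" "0 < r" "r < 1/8"
    "e < 2 * r * d" "0 \<le> e" "nw \<le> nz + e" "nz - e \<le> nw"
  shows "(1 - nw^2) / 4 \<le> d \<and> d \<le> 4 * (1 - nw^2)"
proof -
  have d0: "0 < d" "d \<le> 1" using assms by (auto simp: abs_square_less_1)
  have "2 * r * d < (1/4) * d" using assms(6) d0 by (intro mult_strict_right_mono) auto
  then have e1: "e < d / 4" using assms(7) by linarith
  have A: "1 - nw^2 \<le> 3 * d"
  proof (cases "nz \<ge> e")
    case True
    then have "(nz - e)^2 \<le> nw^2" using assms by (intro power_mono) auto
    then have "nw^2 \<ge> nz^2 - 2*nz*e" by (simp add: power2_diff) (smt (verit) zero_le_power2)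
    moreover have "nz * e \<le> e" using assms by (simp add: mult_left_le_one_le)
    ultimately show ?thesis using assms e1 d0 by linarith
  next
    case False
    then have "nz < 1/4" using e1 d0 by linarith
    then have "nz * nz \<le> (1/4) * (1/4)" using assms(1) by (intro mult_mono) auto
    then have "nz^2 \<le> 1/16" by (simp add: power2_eq_square)
    moreover have "0 \<le> nw^2" by simp
    ultimately show ?thesis using assms(4) by linarith
  qed
  have "nw^2 \<le> (nz + e)^2" using assms by (intro power_mono) auto
  also have "\<dots> = nz^2 + 2*nz*e + e^2" by (simp add: power2_sum)
  finally have B1: "nw^2 \<le> nz^2 + 2*nz*e + e^2" .
  have "nz * e \<le> e" using assms by (simp add: mult_left_le_one_le)
  moreover have "e * e \<le> e * (d/4)" using e1 assms(8) by (intro mult_left_mono) auto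
  then have "e^2 \<le> e * (d/4)" by (simp add: power2_eq_square)
  moreover have "e * (d/4) \<le> e * 1" using d0 assms(8) by (intro mult_left_mono) auto
  ultimately have "1 - nw^2 \<ge> d - 3*e" using B1 assms(4) by linarith
  then have "1 - nw^2 \<ge> d / 4" using e1 by linarith
  then show ?thesis using A by auto
qed

theorem lemma2p4:
  fixes r :: real and C\<^sub>0 :: real
  assumes "C\<^sub>0 = 1/4" and "0 < r" and "r < C\<^sub>0 / 2"
  shows "\<exists>C>0. \<forall>z w :: complex^'n. z \<in> unit_ball \<longrightarrow> w \<in> unit_ball \<longrightarrow> w \<in> D_psi z r \<longrightarrow>
            (1 - (norm w)\<^sup>2) / C \<le> 1 - (norm z)\<^sup>2 \<and> 1 - (norm z)\<^sup>2 \<le> C * (1 - (norm w)\<^sup>2)"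
proof (intro exI[of _ 4] conjI allI impI)
  fix z w :: "complex^'n"
  assume z: "z \<in> unit_ball" and w: "w \<in> unit_ball" and D: "w \<in> D_psi z r"
  define d where "d = 1 - (norm z)\<^sup>2"
  have nz: "norm z < 1" using z by (simp add: unit_ball_def)
  have d0: "0 < d" "d \<le> 1" using nz norm_ge_zero[of z] unfolding d_def
    by (auto simp: abs_square_less_1)
  have "d powr (3/2) \<le> d powr 1" using d0 by (intro powr_mono') auto
  then have pw: "d powr (3/2) \<le> d" using d0 by simp
  have "norm (z - Pz z w) < r * (1 - (norm z)\<^sup>2) powr (3/2)" using D unfolding D_psi_def by auto
  then have "norm (z - Pz z w) < r * d powr (3/2)" by (simp only: d_def)
  then have h1: "norm (z - Pz z w) < r * d" using mult_left_mono[OF pw, of r] assms(2) by linarith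
  have h2: "norm (Qz z w) < r * d" using D unfolding D_psi_def d_def by auto
  have "z - w = (z - Pz z w) - Qz z w" by (simp add: Qz_def)
  then have "norm (z - w) \<le> norm (z - Pz z w) + norm (Qz z w)"
    by (metis norm_triangle_ineq4)
  then have e: "norm (z - w) < 2 * r * d" using h1 h2 by linarith
  have t1: "norm w \<le> norm z + norm (z - w)"
    using norm_triangle_ineq4[of z "z - w"] by simp
  have t2: "norm z - norm (z - w) \<le> norm w"
    using norm_triangle_sub[of z w] by simp
  have "(1 - (norm w)^2) / 4 \<le> d \<and> d \<le> 4 * (1 - (norm w)^2)"
    by (rule key_real[OF norm_ge_zero nz norm_ge_zero d_def assms(2) _ e norm_ge_zero t1 t2])
       (use assms in auto)
  then show "(1 - (norm w)\<^sup>2) / 4 \<le> 1 - (norm z)\<^sup>2" "1 - (norm z)\<^sup>2 \<le> 4 * (1 - (norm w)\<^sup>2)"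
    by (auto simp: d_def)
qed simp

end
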